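(* Consider the online execution scheduling algorithm OES (described in the context) applied to a distributed GNN training job with a fixed task placement, and let $T_{OES}$ be the resulting training makespan (completion time of all tasks of iteration $N$). Let $T^*$ be the optimal makespan of the offline execution and flow scheduling problem (described in the context) for the same placement and the same data volumes. Then $T_{OES}\le \Delta\, T^*$, where $\Delta=\max_{m\in\{1,\dots,M\}}\max\{\widehat{\Delta^m_{in}},\widehat{\Delta^m_{out}}\}$; i.e., OES is $\Delta$-competitive.
   Context: Setting (distributed GNN training job). There are $M$ machines; machine $m$ has available incoming bandwidth $B^m_{in}$ and outgoing bandwidth $B^m_{out}$. The set of tasks is $J=J_g\cup J_s\cup J_w\cup J_{ps}$ (graph store servers, samplers, workers, parameter servers (PSs)); each worker has an associated set of samplers. A fixed placement assigns each task $j$ to exactly one machine ($y^m_j=1$ iff $j$ is on machine $m$). Training runs for $N$ iterations in discrete time steps $t=1,\dots,T$; task $j$ takes execution time $p_j$ in every iteration; $(j,n)$ denotes task $j$ in iteration $n$. Successor relation $succ(j,n)$: $(s,n)\in succ(g,n)$ for every graph store server $g$ and sampler $s$; $(w,n)\in succ(s,n)$ for every sampler $s$ and its associated worker $w$; $(ps,n)\in succ(w,n)$ for every worker $w$ and PS $ps$; $(w,n+1)\in succ(ps,n)$ for every PS $ps$ and worker $w$. For each $(j',n')\in succ(j,n)$ with $j,j'$ on different machines there is a flow $(j,n)\to(j',n')$ of data volume $d_{(j,n)\to(j',n')}$. Offline scheduling problem. Choose start times $x^t_{j,n}\in\{0,1\}$ (each $(j,n)$ starts exactly once; graph store servers start iteration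 1 at $t=1$) and transmission amounts $k^t_{(j,n)\to(j',n')}\ge 0$ such that: each flow transmits total amount $d_{(j,n)\to(j',n')}$; a flow transmits only at times $t\ge$ (start of $(j,n)$) $+p_j$ and strictly before the start of $(j',n')$; if $j,j'$ are on the same machine, $(j',n')$ starts no earlier than the finish of $(j,n)$; $(j,n+1)$ starts no earlier than the finish of $(j,n)$; the last transmission time of $(j,n)\to(j',n')$ is strictly before the first transmission time of $(j,n+1)\to(j',n'+1)$; and at each time $t$ the total amount sent out of (into) machine $m$ over inter-machine flows is at most $B^m_{out}$ ($B^m_{in}$). The objective is to minimize the makespan $\max_{j}\{(\text{start time of }(j,N))+p_j\}$. $T^*$ is its optimal value when all data volumes are known in advance. (Online, the data volumes are not known beforehand.) Algorithm OES. It maintains a set $F_{act}$ of active flows and a set $F_{pend}$ of pending flows. At $t=1$ all graph store servers of iteration 1 start. At each time step $t$: every task $(j,n)$ whose dependencies are all satisfied starts; for every task $(j,n)$ that finished at $t-1$ and every inter-machine flow $(j,n)\to(j',n')$ out of it, the flow is added to $F_{pend}$ if $(j,n-1)\to(j',n'-1)\in F_{act}\cup F_{pend}$, and to $F_{act}$ otherwise; for every flow $(j,n)\to(j',n')$ that finished at $t-1$, if $(j,n+1)\to(j',n'+1)\in F_{pend}$ it is moved to $F_{act}$. Then, with $\Delta^m_{in}$ (resp. $\Delta^m_{out}$) the number of flows in $F_{act}$ whose destination (resp. source) task is on machine $m$, every active flow from a task on machine $m$ to a task on machine $m'$ transmits $\min\{B^{m'}_{in}/\Delta^{m'}_{in},\,B^m_{out}/\Delta^m_{out}\}$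 data units at time $t$. It stops when all tasks of iteration $N$ are done. One-iteration degrees. Let $F_{one\_iter}$ be the set of all inter-machine flows of one training iteration (including the transfers of parameters updated by the PSs in that iteration to the workers). $\widehat{\Delta^m_{in}}$ (resp. $\widehat{\Delta^m_{out}}$) is the number of flows in $F_{one\_iter}$ whose destination (resp. source) task is placed on machine $m$. *)

theory Defs
  imports Complex_Main
begin

text \<open>A task instance is a pair (j, n): task j in iteration n (iterations 1..N). Time steps are
  natural numbers 1, 2, ...; a task started at time s with execution time p
  occupies steps s .. s+p-1 and its outgoing flows may transmit from time s+p on.\<close>

type_synonym 't inst = "'t \<times> nat"
type_synonym 't flow = "'t inst \<times> 't inst"

record 't gnn_job =
  Jg    :: "'t set"             \<comment> \<open>graph store servers\<close>
  Js    :: "'t set"             \<comment> \<open>samplers\<close>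
  Jw    :: "'t set"             \<comment> \<open>workers\<close>
  Jps   :: "'t set"             \<comment> \<open>parameter servers\<close>
  assoc :: "'t \<Rightarrow> 't \<Rightarrow> bool"   \<comment> \<open>assoc s w: sampler s is associated with worker w\<close>
  place :: "'t \<Rightarrow> nat"          \<comment> \<open>machine of each task (machines 1..M)\<close>
  ptime :: "'t \<Rightarrow> nat"
  nmach :: nat
  niter :: nat
  Bin   :: "nat \<Rightarrow> real"
  Bout  :: "nat \<Rightarrow> real"
  vol   :: "'t flow \<Rightarrow> real"

definition tasks :: "'t gnn_job \<Rightarrow> 't set" where
  "tasks G = Jg G \<union> Js G \<union> Jw G \<union> Jps G"

definition iter_edge :: "'t gnn_job \<Rightarrow> 't \<Rightarrow> 't \<Rightarrow> bool" where
  "iter_edge G j j' \<longleftrightarrow>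
     (j \<in> Jg G \<and> j' \<in> Js G)
   \<or> (j \<in> Js G \<and> j' \<in> Jw G \<and> assoc G j j')
   \<or> (j \<in> Jw G \<and> j' \<in> Jps G)"

definition next_edge :: "'t gnn_job \<Rightarrow> 't \<Rightarrow> 't \<Rightarrow> bool" where
  "next_edge G j j' \<longleftrightarrow> j \<in> Jps G \<and> j' \<in> Jw G"

text \<open>The successor relation: succ G (j,n) (j',n') means (j',n') \<in> succ(j,n),
  restricted to iterations 1..N.\<close>

definition succ :: "'t gnn_job \<Rightarrow> 't inst \<Rightarrow> 't inst \<Rightarrow> bool" where
  "succ G q q' \<longleftrightarrow>
     1 \<le> snd q \<and> snd q \<le> niter G \<and> 1 \<le> snd q' \<and> snd q' \<le> niter G \<and>
     ((iter_edge G (fst q) (fst q') \<and> snd q' = snd q)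
      \<or> (next_edge G (fst q) (fst q') \<and> snd q' = Suc (snd q)))"

definition flows :: "'t gnn_job \<Rightarrow> 't flow set" where
  "flows G = {f. succ G (fst f) (snd f) \<and> place G (fst (fst f)) \<noteq> place G (fst (snd f))}"

definition src_mach :: "'t gnn_job \<Rightarrow> 't flow \<Rightarrow> nat" where
  "src_mach G f = place G (fst (fst f))"

definition dst_mach :: "'t gnn_job \<Rightarrow> 't flow \<Rightarrow> nat" where
  "dst_mach G f = place G (fst (snd f))"

definition next_flow :: "'t flow \<Rightarrow> 't flow" where
  "next_flow f = ((fst (fst f), Suc (snd (fst f))), (fst (snd f), Suc (snd (snd f))))"

text \<open>x q is the start time of task instance q, k f t the amount of flow f
  transmitted at time t.\<close>

definition feasible :: "'t gnn_job \<Rightarrow> ('t inst \<Rightarrow> nat) \<Rightarrow> ('t flow \<Rightarrow> nat \<Rightarrow> real) \<Rightarrow> bool" where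
  "feasible G x k \<longleftrightarrow>
     (\<forall>j\<in>tasks G. \<forall>n\<in>{1..niter G}. 1 \<le> x (j, n))
   \<and> (\<forall>g\<in>Jg G. x (g, 1) = 1)
   \<and> (\<forall>f\<in>flows G.
        (\<forall>t. 0 \<le> k f t)
      \<and> (\<forall>t. k f t \<noteq> 0 \<longrightarrow> x (fst f) + ptime G (fst (fst f)) \<le> t \<and> t < x (snd f))
      \<and> (\<Sum>t\<in>{x (fst f) + ptime G (fst (fst f)) ..< x (snd f)}. k f t) = vol G f)
   \<and> (\<forall>q q'. succ G q q' \<and> place G (fst q) = place G (fst q')
        \<longrightarrow> x q + ptime G (fst q) \<le> x q')
   \<and> (\<forall>j\<in>tasks G. \<forall>n. 1 \<le> n \<and> n < niter G \<longrightarrow> x (j, n) + ptime G j \<le> x (j, Suc n))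
   \<and> (\<forall>f\<in>flows G. next_flow f \<in> flows G \<longrightarrow>
        (\<forall>t t'. k f t \<noteq> 0 \<and> k (next_flow f) t' \<noteq> 0 \<longrightarrow> t < t'))
   \<and> (\<forall>m t. (\<Sum>f\<in>{f\<in>flows G. src_mach G f = m}. k f t) \<le> Bout G m)
   \<and> (\<forall>m t. (\<Sum>f\<in>{f\<in>flows G. dst_mach G f = m}. k f t) \<le> Bin G m)"

definition makespan :: "'t gnn_job \<Rightarrow> ('t inst \<Rightarrow> nat) \<Rightarrow> nat" where
  "makespan G x = Max ((\<lambda>j. x (j, niter G) + ptime G j) ` tasks G)"

record 't oes_st =
  st   :: "'t inst \<Rightarrow> nat option"
  sent :: "'t flow \<Rightarrow> real"
  fin  :: "'t flow \<Rightarrow> nat option"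
  act  :: "'t flow set"
  pend :: "'t flow set"

definition oes_init :: "'t oes_st" where
  "oes_init = \<lparr>st = (\<lambda>_. None), sent = (\<lambda>_. 0), fin = (\<lambda>_. None), act = {}, pend = {}\<rparr>"

text \<open>Task instance q has finished at time t-1 or earlier.\<close>
definition done_by :: "'t gnn_job \<Rightarrow> 't oes_st \<Rightarrow> 't inst \<Rightarrow> nat \<Rightarrow> bool" where
  "done_by G \<sigma> q t \<longleftrightarrow> (\<exists>s. st \<sigma> q = Some s \<and> s + ptime G (fst q) \<le> t)"

definition ready :: "'t gnn_job \<Rightarrow> 't oes_st \<Rightarrow> nat \<Rightarrow> 't inst \<Rightarrow> bool" where
  "ready G \<sigma> t q \<longleftrightarrow>
     fst q \<in> tasks G \<and> 1 \<le> snd q \<and> snd q \<le> niter G \<and> st \<sigma> q = None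
   \<and> (snd q = 1 \<or> done_by G \<sigma> (fst q, snd q - 1) t)
   \<and> (\<forall>q0. succ G q0 q \<longrightarrow>
        (if place G (fst q0) = place G (fst q) then done_by G \<sigma> q0 t
         else (\<exists>s. fin \<sigma> (q0, q) = Some s \<and> s < t)))"

text \<open>One time step t of OES, applied to the state after step t-1.\<close>
definition oes_step :: "'t gnn_job \<Rightarrow> nat \<Rightarrow> 't oes_st \<Rightarrow> 't oes_st" where
  "oes_step G t \<sigma> =
    (let
       \<comment> \<open>1. start every task whose dependencies are satisfied\<close>
       st1 = (\<lambda>q. if ready G \<sigma> t q then Some t else st \<sigma> q);
       \<comment> \<open>2. flows out of tasks that finished at t-1\<close>
       newf = {f\<in>flows G. \<exists>s. st \<sigma> (fst f) = Some s \<and> s + ptime G (fst (fst f)) = t};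
       newp = {f\<in>newf. \<exists>g. next_flow g = f \<and> g \<in> act \<sigma> \<union> pend \<sigma>};
       newa = newf - newp;
       \<comment> \<open>3. pending flows whose previous-iteration flow finished at t-1 become active\<close>
       prom = {f\<in>pend \<sigma> \<union> newp. \<exists>g. fin \<sigma> g = Some (t - 1) \<and> next_flow g = f};
       act1 = act \<sigma> \<union> newa \<union> prom;
       pend1 = (pend \<sigma> \<union> newp) - prom;
       \<comment> \<open>4. transmission with the rate min(B_in/Delta_in, B_out/Delta_out)\<close>
       din = (\<lambda>m. card {f\<in>act1. dst_mach G f = m});
       dout = (\<lambda>m. card {f\<in>act1. src_mach G f = m});
       rate = (\<lambda>f. min (Bin G (dst_mach G f) / real (din (dst_mach G f)))
                        (Bout G (src_mach G f) / real (dout (src_mach G f))));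
       amt = (\<lambda>f. if f \<in> act1 then min (rate f) (vol G f - sent \<sigma> f) else 0);
       sent1 = (\<lambda>f. sent \<sigma> f + amt f);
       fdone = {f\<in>act1. vol G f \<le> sent1 f};
       fin1 = (\<lambda>f. if f \<in> fdone then Some t else fin \<sigma> f)
     in \<lparr>st = st1, sent = sent1, fin = fin1, act = act1 - fdone, pend = pend1\<rparr>)"

text \<open>State of OES after time step t (t = 0: before the start).\<close>
primrec oes_state :: "'t gnn_job \<Rightarrow> nat \<Rightarrow> 't oes_st" where
  "oes_state G 0 = oes_init"
| "oes_state G (Suc t) = oes_step G (Suc t) (oes_state G t)"

definition oes_start :: "'t gnn_job \<Rightarrow> 't inst \<Rightarrow> nat \<Rightarrow> bool" where
  "oes_start G q s \<longleftrightarrow> st (oes_state G s) q = Some s"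

definition oes_terminates :: "'t gnn_job \<Rightarrow> bool" where
  "oes_terminates G \<longleftrightarrow> (\<forall>j\<in>tasks G. \<exists>s. oes_start G (j, niter G) s)"

definition oes_makespan :: "'t gnn_job \<Rightarrow> nat" where
  "oes_makespan G = Max ((\<lambda>j. (THE s. oes_start G (j, niter G) s) + ptime G j) ` tasks G)"

definition one_iter_flows :: "'t gnn_job \<Rightarrow> ('t \<times> 't) set" where
  "one_iter_flows G = {(j, j'). (iter_edge G j j' \<or> next_edge G j j') \<and> place G j \<noteq> place G j'}"

definition deg_in :: "'t gnn_job \<Rightarrow> nat \<Rightarrow> nat" where
  "deg_in G m = card {e\<in>one_iter_flows G. place G (snd e) = m}"

definition deg_out :: "'t gnn_job \<Rightarrow> nat \<Rightarrow> nat" where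
  "deg_out G m = card {e\<in>one_iter_flows G. place G (fst e) = m}"

definition Delta :: "'t gnn_job \<Rightarrow> nat" where
  "Delta G = Max ((\<lambda>m. max (deg_in G m) (deg_out G m)) ` {1..nmach G})"

definition wf_job :: "'t gnn_job \<Rightarrow> bool" where
  "wf_job G \<longleftrightarrow>
     finite (tasks G)
   \<and> Jg G \<inter> Js G = {} \<and> Jg G \<inter> Jw G = {} \<and> Jg G \<inter> Jps G = {}
   \<and> Js G \<inter> Jw G = {} \<and> Js G \<inter> Jps G = {} \<and> Jw G \<inter> Jps G = {}
   \<and> 1 \<le> nmach G \<and> 1 \<le> niter G
   \<and> (\<forall>j\<in>tasks G. place G j \<in> {1..nmach G})
   \<and> (\<forall>j\<in>tasks G. 1 \<le> ptime G j)
   \<and> (\<forall>m\<in>{1..nmach G}. 0 < Bin G m \<and> 0 < Bout G m)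
   \<and> (\<forall>f\<in>flows G. 0 < vol G f)"

end

theory Submission imports Defs begin

definition newf :: "'t gnn_job \<Rightarrow> nat \<Rightarrow> 't oes_st \<Rightarrow> 't flow set" where
  "newf G t \<sigma> = {f\<in>flows G. \<exists>s. st \<sigma> (fst f) = Some s \<and> s + ptime G (fst (fst f)) = t}"
definition newp :: "'t gnn_job \<Rightarrow> nat \<Rightarrow> 't oes_st \<Rightarrow> 't flow set" where
  "newp G t \<sigma> = {f\<in>newf G t \<sigma>. \<exists>g. next_flow g = f \<and> g \<in> act \<sigma> \<union> pend \<sigma>}"
definition prom :: "'t gnn_job \<Rightarrow> nat \<Rightarrow> 't oes_st \<Rightarrow> 't flow set" where
  "prom G t \<sigma> = {f\<in>pend \<sigma> \<union> newp G t \<sigma>. \<exists>g. fin \<sigma> g = Some (t - 1) \<and> next_flow g = f}"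
definition act1 :: "'t gnn_job \<Rightarrow> nat \<Rightarrow> 't oes_st \<Rightarrow> 't flow set" where
  "act1 G t \<sigma> = act \<sigma> \<union> (newf G t \<sigma> - newp G t \<sigma>) \<union> prom G t \<sigma>"
definition pend1 :: "'t gnn_job \<Rightarrow> nat \<Rightarrow> 't oes_st \<Rightarrow> 't flow set" where
  "pend1 G t \<sigma> = (pend \<sigma> \<union> newp G t \<sigma>) - prom G t \<sigma>"
definition rate1 :: "'t gnn_job \<Rightarrow> nat \<Rightarrow> 't oes_st \<Rightarrow> 't flow \<Rightarrow> real" where
  "rate1 G t \<sigma> f = min (Bin G (dst_mach G f) / real (card {f'\<in>act1 G t \<sigma>. dst_mach G f' = dst_mach G f}))
                        (Bout G (src_mach G f) / real (card {f'\<in>act1 G t \<sigma>. src_mach G f' = src_mach G f}))"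
definition amt1 :: "'t gnn_job \<Rightarrow> nat \<Rightarrow> 't oes_st \<Rightarrow> 't flow \<Rightarrow> real" where
  "amt1 G t \<sigma> f = (if f \<in> act1 G t \<sigma> then min (rate1 G t \<sigma> f) (vol G f - sent \<sigma> f) else 0)"
definition fdone1 :: "'t gnn_job \<Rightarrow> nat \<Rightarrow> 't oes_st \<Rightarrow> 't flow set" where
  "fdone1 G t \<sigma> = {f\<in>act1 G t \<sigma>. vol G f \<le> sent \<sigma> f + amt1 G t \<sigma> f}"

lemma oes_step_alt: "oes_step G t \<sigma> =
  \<lparr>st = (\<lambda>q. if ready G \<sigma> t q then Some t else st \<sigma> q),
   sent = (\<lambda>f. sent \<sigma> f + amt1 G t \<sigma> f),
   fin = (\<lambda>f. if f \<in> fdone1 G t \<sigma> then Some t else fin \<sigma> f),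
   act = act1 G t \<sigma> - fdone1 G t \<sigma>, pend = pend1 G t \<sigma>\<rparr>"
  unfolding oes_step_def Let_def newf_def newp_def prom_def act1_def pend1_def rate1_def amt1_def fdone1_def
  by simp

lemma step_st: "st (oes_step G t \<sigma>) q = (if ready G \<sigma> t q then Some t else st \<sigma> q)"
  and step_sent: "sent (oes_step G t \<sigma>) f = sent \<sigma> f + amt1 G t \<sigma> f"
  and step_fin: "fin (oes_step G t \<sigma>) f = (if f \<in> fdone1 G t \<sigma> then Some t else fin \<sigma> f)"
  and step_act: "act (oes_step G t \<sigma>) = act1 G t \<sigma> - fdone1 G t \<sigma>"
  and step_pend: "pend (oes_step G t \<sigma>) = pend1 G t \<sigma>"
  by (simp_all add: oes_step_alt)

definition pr :: "'t flow \<Rightarrow> 't \<times> 't" where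
  "pr f = (fst (fst f), fst (snd f))"
definition prevf :: "'t flow \<Rightarrow> 't flow" where
  "prevf f = ((fst (fst f), snd (fst f) - 1), (fst (snd f), snd (snd f) - 1))"
definition valid :: "'t gnn_job \<Rightarrow> 't inst \<Rightarrow> bool" where
  "valid G q \<longleftrightarrow> fst q \<in> tasks G \<and> 1 \<le> snd q \<and> snd q \<le> niter G"
definition lvl :: "'t gnn_job \<Rightarrow> 't \<Rightarrow> nat" where
  "lvl G j = (if j \<in> Jg G then 0 else if j \<in> Js G then 1 else if j \<in> Jw G then 2 else 3)"
definition rk :: "'t gnn_job \<Rightarrow> 't inst \<Rightarrow> nat" where
  "rk G q = 4 * snd q + lvl G (fst q)"

lemma prevf_next[simp]: "prevf (next_flow g) = g"
  by (simp add: prevf_def next_flow_def)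
lemma next_flow_inj: "next_flow g = next_flow g' \<Longrightarrow> g = g'"
  by (metis prevf_next)
lemma pr_prevf[simp]: "pr (prevf f) = pr f"
  by (simp add: pr_def prevf_def)
lemma fst_prevf: "fst (prevf f) = (fst (fst f), snd (fst f) - 1)"
  by (simp add: prevf_def)

locale job =
  fixes G :: "'t gnn_job"
  assumes wf: "wf_job G"
begin

lemma fin_tasks: "finite (tasks G)" using wf by (simp add: wf_job_def)
lemma disj: "Jg G \<inter> Js G = {}" "Jg G \<inter> Jw G = {}" "Jg G \<inter> Jps G = {}"
   "Js G \<inter> Jw G = {}" "Js G \<inter> Jps G = {}" "Jw G \<inter> Jps G = {}"
  using wf by (auto simp add: wf_job_def)
lemma ptime_pos: "j \<in> tasks G \<Longrightarrow> 1 \<le> ptime G j" using wf by (simp add: wf_job_def)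
lemma place_rng: "j \<in> tasks G \<Longrightarrow> place G j \<in> {1..nmach G}" using wf by (simp add: wf_job_def)
lemma B_pos: "m \<in> {1..nmach G} \<Longrightarrow> 0 < Bin G m \<and> 0 < Bout G m" using wf by (simp add: wf_job_def)
lemma vol_pos: "f \<in> flows G \<Longrightarrow> 0 < vol G f" using wf by (simp add: wf_job_def)

lemma succ_valid: "succ G q0 q \<Longrightarrow> valid G q0 \<and> valid G q"
  by (auto simp: succ_def valid_def iter_edge_def next_edge_def tasks_def)

lemma flows_valid: "f \<in> flows G \<Longrightarrow> valid G (fst f) \<and> valid G (snd f)"
  by (auto simp: flows_def dest: succ_valid)

lemma flows_dst_iter: "f \<in> flows G \<Longrightarrow>
   snd (snd f) = snd (fst f) + (if next_edge G (fst (fst f)) (fst (snd f)) then 1 else 0)"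
  using disj by (auto simp: flows_def succ_def iter_edge_def next_edge_def)

lemma flows_pr_eq: "f \<in> flows G \<Longrightarrow> g \<in> flows G \<Longrightarrow> pr f = pr g \<Longrightarrow> snd (fst f) = snd (fst g) \<Longrightarrow> f = g"
  apply (frule flows_dst_iter, drule flows_dst_iter[of g])
  by (cases f; cases g; auto simp: pr_def)

lemma prev_flows: "f \<in> flows G \<Longrightarrow> 2 \<le> snd (fst f) \<Longrightarrow> prevf f \<in> flows G \<and> next_flow (prevf f) = f"
  apply (frule flows_dst_iter)
  by (cases f; auto simp: flows_def succ_def prevf_def next_flow_def)

lemma flows_sub: "flows G \<subseteq> ((tasks G \<times> {1..niter G}) \<times> (tasks G \<times> {1..niter G}))"
  using flows_valid by (auto simp: valid_def)

lemma flows_fin: "finite (flows G)"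
  by (rule finite_subset[OF flows_sub]) (simp add: fin_tasks)

lemma pr_one_iter: "f \<in> flows G \<Longrightarrow> pr f \<in> one_iter_flows G"
  by (auto simp: flows_def succ_def one_iter_flows_def pr_def)

lemma one_iter_fin: "finite (one_iter_flows G)"
proof -
  have "one_iter_flows G \<subseteq> tasks G \<times> tasks G"
    by (auto simp: one_iter_flows_def iter_edge_def next_edge_def tasks_def)
  thus ?thesis using fin_tasks finite_subset by blast
qed

lemma succ_rk: "succ G q0 q \<Longrightarrow> rk G q0 < rk G q"
  using disj by (auto simp: succ_def rk_def lvl_def iter_edge_def next_edge_def)

lemma prev_rk: "2 \<le> n \<Longrightarrow> rk G (j, n - 1) < rk G (j, n)"
  by (simp add: rk_def)

definition P1 :: "nat \<Rightarrow> 't oes_st \<Rightarrow> bool" where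
 "P1 t \<sigma> \<longleftrightarrow> (\<forall>q s. st \<sigma> q = Some s \<longrightarrow> 1 \<le> s \<and> s \<le> t)"
definition P2 :: "nat \<Rightarrow> 't oes_st \<Rightarrow> bool" where
 "P2 t \<sigma> \<longleftrightarrow> (\<forall>f e. fin \<sigma> f = Some e \<longrightarrow> 1 \<le> e \<and> e \<le> t \<and> f \<in> flows G \<and>
     (\<exists>s. st \<sigma> (fst f) = Some s \<and> s + ptime G (fst (fst f)) \<le> e))"
definition P4 :: "nat \<Rightarrow> 't oes_st \<Rightarrow> bool" where
 "P4 t \<sigma> \<longleftrightarrow> (\<forall>f \<in> act \<sigma> \<union> pend \<sigma>. f \<in> flows G \<and> fin \<sigma> f = None \<and>
     (\<exists>s. st \<sigma> (fst f) = Some s \<and> s + ptime G (fst (fst f)) \<le> t))"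
definition P5 :: "nat \<Rightarrow> 't oes_st \<Rightarrow> bool" where
 "P5 t \<sigma> \<longleftrightarrow> (\<forall>f\<in>flows G. \<forall>s. st \<sigma> (fst f) = Some s \<and> s + ptime G (fst (fst f)) \<le> t \<and> fin \<sigma> f = None
     \<longrightarrow> f \<in> act \<sigma> \<union> pend \<sigma>)"
definition P7 :: "'t oes_st \<Rightarrow> bool" where
 "P7 \<sigma> \<longleftrightarrow> (\<forall>f\<in>flows G. \<forall>g\<in>flows G. pr g = pr f \<and> snd (fst g) < snd (fst f) \<and> (f \<in> act \<sigma> \<or> fin \<sigma> f \<noteq> None)
     \<longrightarrow> fin \<sigma> g \<noteq> None)"
definition P8 :: "'t oes_st \<Rightarrow> bool" where
 "P8 \<sigma> \<longleftrightarrow> (\<forall>j n s. st \<sigma> (j,n) = Some s \<and> 2 \<le> n \<longrightarrow> (\<exists>s'. st \<sigma> (j, n-1) = Some s' \<and> s' + ptime G j \<le> s))"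
definition PS :: "'t oes_st \<Rightarrow> bool" where
 "PS \<sigma> \<longleftrightarrow> (\<forall>f\<in>flows G. fin \<sigma> f = None \<longrightarrow> 0 \<le> sent \<sigma> f \<and> sent \<sigma> f < vol G f)"

definition Inv :: "nat \<Rightarrow> 't oes_st \<Rightarrow> bool" where
 "Inv t \<sigma> \<longleftrightarrow> P1 t \<sigma> \<and> P2 t \<sigma> \<and> P4 t \<sigma> \<and> act \<sigma> \<inter> pend \<sigma> = {} \<and> P5 t \<sigma> \<and> P7 \<sigma> \<and> P8 \<sigma> \<and> PS \<sigma>"

lemma Inv_init: "Inv 0 oes_init"
  by (simp add: Inv_def P1_def P2_def P4_def P5_def P7_def P8_def PS_def oes_init_def vol_pos)

lemma L_st_old: "st \<sigma> q = Some s \<Longrightarrow> st (oes_step G t \<sigma>) q = Some s"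
  by (simp add: step_st ready_def)

lemma L_st_new: "st (oes_step G t \<sigma>) q = Some s \<Longrightarrow>
   st \<sigma> q = Some s \<or> (s = t \<and> st \<sigma> q = None \<and> ready G \<sigma> t q)"
  by (auto simp: step_st ready_def split: if_splits)

lemma L_newf: "f \<in> newf G t \<sigma> \<Longrightarrow> f \<in> flows G \<and> (\<exists>s. st \<sigma> (fst f) = Some s \<and> s + ptime G (fst (fst f)) = t)"
  by (simp add: newf_def)

context
  fixes t \<sigma> assumes I: "Inv t \<sigma>"
begin

lemma I1: "st \<sigma> q = Some s \<Longrightarrow> 1 \<le> s \<and> s \<le> t" using I unfolding Inv_def P1_def by blast
lemma I2: "fin \<sigma> f = Some e \<Longrightarrow> 1 \<le> e \<and> e \<le> t \<and> f \<in> flows G \<and>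
     (\<exists>s. st \<sigma> (fst f) = Some s \<and> s + ptime G (fst (fst f)) \<le> e)" using I unfolding Inv_def P2_def by blast
lemma I4: "f \<in> act \<sigma> \<union> pend \<sigma> \<Longrightarrow> f \<in> flows G \<and> fin \<sigma> f = None \<and>
     (\<exists>s. st \<sigma> (fst f) = Some s \<and> s + ptime G (fst (fst f)) \<le> t)" using I unfolding Inv_def P4_def by blast
lemma Idisj: "act \<sigma> \<inter> pend \<sigma> = {}" using I by (simp add: Inv_def)
lemma I5: "f\<in>flows G \<Longrightarrow> st \<sigma> (fst f) = Some s \<Longrightarrow> s + ptime G (fst (fst f)) \<le> t \<Longrightarrow> fin \<sigma> f = None
     \<Longrightarrow> f \<in> act \<sigma> \<union> pend \<sigma>" using I unfolding Inv_def P5_def by blast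
lemma I7: "f\<in>flows G \<Longrightarrow> g\<in>flows G \<Longrightarrow> pr g = pr f \<Longrightarrow> snd (fst g) < snd (fst f) \<Longrightarrow> f \<in> act \<sigma> \<or> fin \<sigma> f \<noteq> None
     \<Longrightarrow> fin \<sigma> g \<noteq> None" using I unfolding Inv_def P7_def by blast
lemma I8: "st \<sigma> (j,n) = Some s \<Longrightarrow> 2 \<le> n \<Longrightarrow> (\<exists>s'. st \<sigma> (j, n-1) = Some s' \<and> s' + ptime G j \<le> s)"
  using I unfolding Inv_def P8_def by blast
lemma IS: "f\<in>flows G \<Longrightarrow> fin \<sigma> f = None \<Longrightarrow> 0 \<le> sent \<sigma> f \<and> sent \<sigma> f < vol G f"
  using I unfolding Inv_def PS_def by blast

lemma L_newf_fin: "f \<in> newf G (Suc t) \<sigma> \<Longrightarrow> fin \<sigma> f = None"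
proof (rule ccontr)
  assume a: "f \<in> newf G (Suc t) \<sigma>" "fin \<sigma> f \<noteq> None"
  then obtain e where e: "fin \<sigma> f = Some e" by auto
  from a(1) obtain s where s: "st \<sigma> (fst f) = Some s" "s + ptime G (fst (fst f)) = Suc t" by (auto dest: L_newf)
  from I2[OF e] s show False by auto
qed

lemma L_act1_props: "f \<in> act1 G (Suc t) \<sigma> \<Longrightarrow> f \<in> flows G \<and> fin \<sigma> f = None \<and>
    (\<exists>s. st \<sigma> (fst f) = Some s \<and> s + ptime G (fst (fst f)) \<le> Suc t)"
proof -
  assume f: "f \<in> act1 G (Suc t) \<sigma>"
  have nf: "f \<in> flows G \<and> fin \<sigma> f = None \<and>
    (\<exists>s. st \<sigma> (fst f) = Some s \<and> s + ptime G (fst (fst f)) \<le> Suc t)" if "f \<in> newf G (Suc t) \<sigma>"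
    using L_newf[OF that] L_newf_fin[OF that] by fastforce
  have ap: "f \<in> flows G \<and> fin \<sigma> f = None \<and>
    (\<exists>s. st \<sigma> (fst f) = Some s \<and> s + ptime G (fst (fst f)) \<le> Suc t)" if "f \<in> act \<sigma> \<union> pend \<sigma>"
    using I4[OF that] by fastforce
  from f consider "f \<in> act \<sigma> \<union> pend \<sigma>" | "f \<in> newf G (Suc t) \<sigma>"
    unfolding act1_def prom_def newp_def by blast
  then show ?thesis using nf ap by cases
qed

lemma L_fdone_sub: "fdone1 G (Suc t) \<sigma> \<subseteq> act1 G (Suc t) \<sigma>"
  by (auto simp: fdone1_def)

lemma L_fin_old: "fin \<sigma> f = Some e \<Longrightarrow> fin (oes_step G (Suc t) \<sigma>) f = Some e"
  using L_fdone_sub L_act1_props by (fastforce simp: step_fin)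

lemma L_fin_new: assumes "fin (oes_step G (Suc t) \<sigma>) f = Some e" shows "
    fin \<sigma> f = Some e \<or> (e = Suc t \<and> f \<in> fdone1 G (Suc t) \<sigma> \<and> fin \<sigma> f = None)"
proof (cases "fin \<sigma> f")
  case None
  then show ?thesis using assms by (auto simp: step_fin split: if_splits)
next
  case (Some y)
  then have "fin (oes_step G (Suc t) \<sigma>) f = Some y" by (rule L_fin_old)
  then show ?thesis using assms Some by simp
qed

lemma L_act1_prev: "f \<in> act1 G (Suc t) \<sigma> \<Longrightarrow> 2 \<le> snd (fst f) \<Longrightarrow> fin \<sigma> (prevf f) \<noteq> None"
proof -
  assume f: "f \<in> act1 G (Suc t) \<sigma>" and n: "2 \<le> snd (fst f)"
  have ff: "f \<in> flows G" using L_act1_props[OF f] by simp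
  have pf: "prevf f \<in> flows G" "next_flow (prevf f) = f" using prev_flows[OF ff n] by auto
  consider "f \<in> act \<sigma>" | "f \<in> newf G (Suc t) \<sigma> - newp G (Suc t) \<sigma>" | "f \<in> prom G (Suc t) \<sigma>"
    using f by (auto simp: act1_def)
  then show ?thesis
  proof cases
    case 1
    show ?thesis by (rule I7[OF ff pf(1)]) (use 1 n in \<open>auto simp: fst_prevf\<close>)
  next
    case 2
    then obtain s where s: "st \<sigma> (fst f) = Some s" "s + ptime G (fst (fst f)) = Suc t"
      by (auto dest: L_newf)
    obtain s' where s': "st \<sigma> (fst (fst f), snd (fst f) - 1) = Some s'" "s' + ptime G (fst (fst f)) \<le> s"
      using I8[of "fst (fst f)" "snd (fst f)" s] s n by (cases "fst f") auto
    have "s \<le> t" using I1[OF s(1)] by simp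
    show ?thesis
    proof
      assume "fin \<sigma> (prevf f) = None"
      with I5[OF pf(1), of s'] s' \<open>s \<le> t\<close> have "prevf f \<in> act \<sigma> \<union> pend \<sigma>"
        by (simp add: fst_prevf)
      with 2 pf(2) show False unfolding newp_def by blast
    qed
  next
    case 3
    then obtain g where "fin \<sigma> g = Some t" "next_flow g = f" by (auto simp: prom_def)
    then show ?thesis by auto
  qed
qed

lemma L_disj: "pend1 G (Suc t) \<sigma> \<inter> act1 G (Suc t) \<sigma> = {}"
proof (rule ccontr)
  assume "pend1 G (Suc t) \<sigma> \<inter> act1 G (Suc t) \<sigma> \<noteq> {}"
  then obtain f where f1: "f \<in> pend1 G (Suc t) \<sigma>" and f2: "f \<in> act1 G (Suc t) \<sigma>" by blast
  from f1 have nprom: "f \<notin> prom G (Suc t) \<sigma>" by (simp add: pend1_def)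
  from f1 consider "f \<in> pend \<sigma>" | "f \<in> newp G (Suc t) \<sigma>" by (auto simp: pend1_def)
  then show False
  proof cases
    case 1
    from I4[of f] 1 obtain s where s: "st \<sigma> (fst f) = Some s" "s + ptime G (fst (fst f)) \<le> t" by auto
    from f2 nprom have "f \<in> act \<sigma> \<or> f \<in> newf G (Suc t) \<sigma>" by (auto simp: act1_def)
    then show False using Idisj 1 s by (auto simp: newf_def)
  next
    case 2
    then obtain s where s: "st \<sigma> (fst f) = Some s" "s + ptime G (fst (fst f)) = Suc t"
      by (auto simp: newp_def newf_def)
    from f2 nprom 2 have "f \<in> act \<sigma>" by (auto simp: act1_def)
    with I4[of f] s show False by auto
  qed
qed

lemma Inv_step: "Inv (Suc t) (oes_step G (Suc t) \<sigma>)"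
proof -
  let ?s = "oes_step G (Suc t) \<sigma>"
  have p1: "P1 (Suc t) ?s"
    unfolding P1_def
  proof (intro allI impI)
    fix q s assume "st ?s q = Some s"
    from L_st_new[OF this] I1 show "1 \<le> s \<and> s \<le> Suc t" by fastforce
  qed
  have p2: "P2 (Suc t) ?s"
    unfolding P2_def
  proof (intro allI impI)
    fix f e assume a: "fin ?s f = Some e"
    from L_fin_new[OF a] show "1 \<le> e \<and> e \<le> Suc t \<and> f \<in> flows G \<and>
     (\<exists>s. st ?s (fst f) = Some s \<and> s + ptime G (fst (fst f)) \<le> e)"
    proof
      assume "fin \<sigma> f = Some e"
      from I2[OF this] L_st_old show ?thesis by fastforce
    next
      assume "e = Suc t \<and> f \<in> fdone1 G (Suc t) \<sigma> \<and> fin \<sigma> f = None"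
      with L_fdone_sub L_act1_props[of f] L_st_old show ?thesis by fastforce
    qed
  qed
  have p4: "P4 (Suc t) ?s"
    unfolding P4_def
  proof
    fix f assume a: "f \<in> act ?s \<union> pend ?s"
    then have a': "f \<in> act1 G (Suc t) \<sigma> \<union> pend1 G (Suc t) \<sigma>" "f \<notin> fdone1 G (Suc t) \<sigma>"
      using L_disj L_fdone_sub by (auto simp: step_act step_pend)
    have "f \<in> flows G \<and> fin \<sigma> f = None \<and> (\<exists>s. st \<sigma> (fst f) = Some s \<and> s + ptime G (fst (fst f)) \<le> Suc t)"
    proof (cases "f \<in> act1 G (Suc t) \<sigma>")
      case True
      then show ?thesis using L_act1_props by blast
    next
      case False
      with a' have "f \<in> pend \<sigma> \<or> f \<in> newp G (Suc t) \<sigma>" by (auto simp: pend1_def)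
      then show ?thesis
      proof
        assume "f \<in> pend \<sigma>" with I4[of f] show ?thesis by fastforce
      next
        assume b: "f \<in> newp G (Suc t) \<sigma>"
        then have "f \<in> newf G (Suc t) \<sigma>" by (simp add: newp_def)
        with L_newf_fin[OF this] L_newf[OF this] show ?thesis by fastforce
      qed
    qed
    with a'(2) L_st_old show "f \<in> flows G \<and> fin ?s f = None \<and>
     (\<exists>s. st ?s (fst f) = Some s \<and> s + ptime G (fst (fst f)) \<le> Suc t)"
      by (fastforce simp: step_fin)
  qed
  have pd: "act ?s \<inter> pend ?s = {}"
    using L_disj by (auto simp: step_act step_pend)
  have p5: "P5 (Suc t) ?s"
    unfolding P5_def
  proof (intro ballI allI impI)
    fix f s assume ff: "f \<in> flows G" and a: "st ?s (fst f) = Some s \<and> s + ptime G (fst (fst f)) \<le> Suc t \<and> fin ?s f = None"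
    have pp: "1 \<le> ptime G (fst (fst f))" using flows_valid[OF ff] ptime_pos by (simp add: valid_def)
    have fn: "fin \<sigma> f = None" using a L_fin_old by (cases "fin \<sigma> f") auto
    have nd: "f \<notin> fdone1 G (Suc t) \<sigma>" using a by (auto simp: step_fin split: if_splits)
    have so: "st \<sigma> (fst f) = Some s" using L_st_new[of "Suc t" \<sigma> "fst f" s] a pp by auto
    have "f \<in> act1 G (Suc t) \<sigma> \<union> pend1 G (Suc t) \<sigma>"
    proof (cases "s + ptime G (fst (fst f)) \<le> t")
      case True
      with I5[OF ff so _ fn] have "f \<in> act \<sigma> \<union> pend \<sigma>" by simp
      then show ?thesis by (auto simp: act1_def pend1_def)
    next
      case False
      with a have "f \<in> newf G (Suc t) \<sigma>" using ff so by (auto simp: newf_def)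
      then show ?thesis by (auto simp: act1_def pend1_def)
    qed
    with nd show "f \<in> act ?s \<union> pend ?s" by (auto simp: step_act step_pend)
  qed
  have p7: "P7 ?s"
    unfolding P7_def
  proof (intro ballI impI)
    fix f g assume ff: "f \<in> flows G" and gf: "g \<in> flows G"
      and a: "pr g = pr f \<and> snd (fst g) < snd (fst f) \<and> (f \<in> act ?s \<or> fin ?s f \<noteq> None)"
    show "fin ?s g \<noteq> None"
    proof (cases "f \<in> act \<sigma> \<or> fin \<sigma> f \<noteq> None")
      case True
      with I7[OF ff gf] a have "fin \<sigma> g \<noteq> None" by blast
      then show ?thesis using L_fin_old by (metis option.exhaust option.distinct(1))
    next
      case False
      with a have fa: "f \<in> act1 G (Suc t) \<sigma>"
        using L_fdone_sub by (auto simp: step_act step_fin split: if_splits)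
      have n2: "2 \<le> snd (fst f)" using a flows_valid[OF gf] by (simp add: valid_def)
      have pf: "prevf f \<in> flows G" using prev_flows[OF ff n2] by simp
      have fp: "fin \<sigma> (prevf f) \<noteq> None" by (rule L_act1_prev[OF fa n2])
      have "fin \<sigma> g \<noteq> None"
      proof (cases "g = prevf f")
        case True then show ?thesis using fp by simp
      next
        case False
        have "snd (fst g) \<noteq> snd (fst (prevf f))"
          using flows_pr_eq[OF gf pf] a False by auto
        then have "snd (fst g) < snd (fst (prevf f))" using a by (auto simp: fst_prevf)
        then show ?thesis using I7[OF pf gf] a fp by simp
      qed
      then show ?thesis using L_fin_old by (metis option.exhaust option.distinct(1))
    qed
  qed
  have p8: "P8 ?s"
    unfolding P8_def
  proof (intro allI impI)
    fix j n s assume a: "st ?s (j, n) = Some s \<and> 2 \<le> n"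
    from L_st_new[of "Suc t" \<sigma> "(j,n)" s] a
    consider "st \<sigma> (j,n) = Some s" | "s = Suc t" "ready G \<sigma> (Suc t) (j,n)" by auto
    then show "\<exists>s'. st ?s (j, n - 1) = Some s' \<and> s' + ptime G j \<le> s"
    proof cases
      case 1 then show ?thesis using I8[OF 1] a L_st_old by blast
    next
      case 2
      then have "done_by G \<sigma> (j, n - 1) (Suc t)" using a by (simp add: ready_def)
      then show ?thesis using 2 L_st_old by (auto simp: done_by_def)
    qed
  qed
  have ps: "PS ?s"
    unfolding PS_def
  proof (intro ballI impI)
    fix f assume ff: "f \<in> flows G" and a: "fin ?s f = None"
    have fn: "fin \<sigma> f = None" using a L_fin_old by (cases "fin \<sigma> f") auto
    have nd: "f \<notin> fdone1 G (Suc t) \<sigma>" using a by (auto simp: step_fin split: if_splits)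
    have o: "0 \<le> sent \<sigma> f" "sent \<sigma> f < vol G f" using IS[OF ff fn] by auto
    show "0 \<le> sent ?s f \<and> sent ?s f < vol G f"
    proof (cases "f \<in> act1 G (Suc t) \<sigma>")
      case True
      have d: "dst_mach G f \<in> {1..nmach G}" "src_mach G f \<in> {1..nmach G}"
        using flows_valid[OF ff] place_rng by (auto simp: valid_def dst_mach_def src_mach_def)
      have "0 \<le> rate1 G (Suc t) \<sigma> f" using B_pos[OF d(1)] B_pos[OF d(2)] by (simp add: rate1_def)
      then have "0 \<le> amt1 G (Suc t) \<sigma> f" using o True by (simp add: amt1_def)
      moreover have "sent \<sigma> f + amt1 G (Suc t) \<sigma> f < vol G f" using nd True by (simp add: fdone1_def)
      ultimately show ?thesis using o by (simp add: step_sent)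
    next
      case False
      then show ?thesis using o by (simp add: step_sent amt1_def)
    qed
  qed
  show ?thesis using p1 p2 p4 pd p5 p7 p8 ps by (simp add: Inv_def)
qed

lemma act1_inj: "f1 \<in> act1 G (Suc t) \<sigma> \<Longrightarrow> f2 \<in> act1 G (Suc t) \<sigma> \<Longrightarrow> pr f1 = pr f2 \<Longrightarrow> f1 = f2"
proof -
  have main: "False" if a: "f1 \<in> act1 G (Suc t) \<sigma>" "f2 \<in> act1 G (Suc t) \<sigma>" "pr f1 = pr f2"
     "snd (fst f1) < snd (fst f2)" for f1 f2
  proof -
    have f1f: "f1 \<in> flows G" "fin \<sigma> f1 = None" using L_act1_props[OF a(1)] by auto
    have f2f: "f2 \<in> flows G" using L_act1_props[OF a(2)] by auto
    have n2: "2 \<le> snd (fst f2)" using a(4) flows_valid[OF f1f(1)] by (simp add: valid_def)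
    have pf: "prevf f2 \<in> flows G" using prev_flows[OF f2f n2] by simp
    have fp: "fin \<sigma> (prevf f2) \<noteq> None" by (rule L_act1_prev[OF a(2) n2])
    show False
    proof (cases "f1 = prevf f2")
      case True then show ?thesis using fp f1f by simp
    next
      case False
      have "snd (fst f1) \<noteq> snd (fst (prevf f2))"
        using flows_pr_eq[OF f1f(1) pf] a False by auto
      then have "snd (fst f1) < snd (fst (prevf f2))" using a by (auto simp: fst_prevf)
      then show ?thesis using I7[OF pf f1f(1)] a fp f1f by simp
    qed
  qed
  assume a: "f1 \<in> act1 G (Suc t) \<sigma>" "f2 \<in> act1 G (Suc t) \<sigma>" "pr f1 = pr f2"
  have f1f: "f1 \<in> flows G" "f2 \<in> flows G" using L_act1_props a by auto
  show "f1 = f2"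
  proof (cases "snd (fst f1)" "snd (fst f2)" rule: linorder_cases)
    case less then show ?thesis using main[OF a] by blast
  next
    case equal then show ?thesis using flows_pr_eq[OF f1f a(3)] by simp
  next
    case greater then show ?thesis using main[OF a(2) a(1) a(3)[symmetric]] by blast
  qed
qed

end

lemma Delta_ge: "m \<in> {1..nmach G} \<Longrightarrow> deg_in G m \<le> Delta G \<and> deg_out G m \<le> Delta G"
proof -
  assume m: "m \<in> {1..nmach G}"
  have "max (deg_in G m) (deg_out G m) \<le> Delta G"
    unfolding Delta_def by (rule Max_ge) (use m in auto)
  then show ?thesis by simp
qed

lemma card_act1_dst:
  assumes I: "Inv t \<sigma>" and f: "f \<in> act1 G (Suc t) \<sigma>"
  shows "1 \<le> card {f'\<in>act1 G (Suc t) \<sigma>. dst_mach G f' = dst_mach G f}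
       \<and> card {f'\<in>act1 G (Suc t) \<sigma>. dst_mach G f' = dst_mach G f} \<le> Delta G"
proof -
  let ?A = "{f'\<in>act1 G (Suc t) \<sigma>. dst_mach G f' = dst_mach G f}"
  let ?d = "dst_mach G f"
  have sub: "?A \<subseteq> flows G" using L_act1_props[OF I] by auto
  have fa: "finite ?A" using finite_subset[OF sub flows_fin] .
  have "f \<in> ?A" using f by simp
  then have "0 < card ?A" using fa card_gt_0_iff by blast
  then have c1: "1 \<le> card ?A" by simp
  have inj: "inj_on pr ?A"
  proof (rule inj_onI)
    fix x y assume "x \<in> ?A" "y \<in> ?A" "pr x = pr y"
    then show "x = y" using act1_inj[OF I, of x y] by simp
  qed
  have im: "pr ` ?A \<subseteq> {e\<in>one_iter_flows G. place G (snd e) = ?d}"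
    using pr_one_iter sub by (auto simp: pr_def dst_mach_def)
  have "card ?A = card (pr ` ?A)" using card_image[OF inj] by simp
  also have "\<dots> \<le> deg_in G ?d" unfolding deg_in_def
    by (rule card_mono[OF _ im]) (use one_iter_fin in auto)
  also have "\<dots> \<le> Delta G"
  proof -
    have "?d \<in> {1..nmach G}" using L_act1_props[OF I f] flows_valid place_rng
      by (auto simp: valid_def dst_mach_def)
    then show ?thesis using Delta_ge by blast
  qed
  finally show ?thesis using c1 by simp
qed

lemma card_act1_src:
  assumes I: "Inv t \<sigma>" and f: "f \<in> act1 G (Suc t) \<sigma>"
  shows "1 \<le> card {f'\<in>act1 G (Suc t) \<sigma>. src_mach G f' = src_mach G f}
       \<and> card {f'\<in>act1 G (Suc t) \<sigma>. src_mach G f' = src_mach G f} \<le> Delta G"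
proof -
  let ?A = "{f'\<in>act1 G (Suc t) \<sigma>. src_mach G f' = src_mach G f}"
  let ?d = "src_mach G f"
  have sub: "?A \<subseteq> flows G" using L_act1_props[OF I] by auto
  have fa: "finite ?A" using finite_subset[OF sub flows_fin] .
  have "f \<in> ?A" using f by simp
  then have "0 < card ?A" using fa card_gt_0_iff by blast
  then have c1: "1 \<le> card ?A" by simp
  have inj: "inj_on pr ?A"
  proof (rule inj_onI)
    fix x y assume "x \<in> ?A" "y \<in> ?A" "pr x = pr y"
    then show "x = y" using act1_inj[OF I, of x y] by simp
  qed
  have im: "pr ` ?A \<subseteq> {e\<in>one_iter_flows G. place G (fst e) = ?d}"
    using pr_one_iter sub by (auto simp: pr_def src_mach_def)
  have "card ?A = card (pr ` ?A)" using card_image[OF inj] by simp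
  also have "\<dots> \<le> deg_out G ?d" unfolding deg_out_def
    by (rule card_mono[OF _ im]) (use one_iter_fin in auto)
  also have "\<dots> \<le> Delta G"
  proof -
    have "?d \<in> {1..nmach G}" using L_act1_props[OF I f] flows_valid place_rng
      by (auto simp: valid_def src_mach_def)
    then show ?thesis using Delta_ge by blast
  qed
  finally show ?thesis using c1 by simp
qed

definition rmin :: "'t flow \<Rightarrow> real" where
  "rmin f = min (Bin G (dst_mach G f)) (Bout G (src_mach G f)) / real (Delta G)"

lemma rate_ge:
  assumes I: "Inv t \<sigma>" and f: "f \<in> act1 G (Suc t) \<sigma>"
  shows "rmin f \<le> rate1 G (Suc t) \<sigma> f"
proof -
  have ff: "f \<in> flows G" using L_act1_props[OF I f] by simp
  have d: "dst_mach G f \<in> {1..nmach G}" "src_mach G f \<in> {1..nmach G}"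
    using flows_valid[OF ff] place_rng by (auto simp: valid_def dst_mach_def src_mach_def)
  have bi: "0 < Bin G (dst_mach G f)" "0 < Bout G (src_mach G f)" using B_pos d by auto
  have c1: "1 \<le> real (card {f'\<in>act1 G (Suc t) \<sigma>. dst_mach G f' = dst_mach G f})"
        "real (card {f'\<in>act1 G (Suc t) \<sigma>. dst_mach G f' = dst_mach G f}) \<le> real (Delta G)"
    using card_act1_dst[OF I f] by auto
  have c2: "1 \<le> real (card {f'\<in>act1 G (Suc t) \<sigma>. src_mach G f' = src_mach G f})"
        "real (card {f'\<in>act1 G (Suc t) \<sigma>. src_mach G f' = src_mach G f}) \<le> real (Delta G)"
    using card_act1_src[OF I f] by auto
  have "Bin G (dst_mach G f) / real (Delta G) \<le> Bin G (dst_mach G f) / real (card {f'\<in>act1 G (Suc t) \<sigma>. dst_mach G f' = dst_mach G f})"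
    by (rule divide_left_mono) (use bi c1 in auto)
  moreover have "Bout G (src_mach G f) / real (Delta G) \<le> Bout G (src_mach G f) / real (card {f'\<in>act1 G (Suc t) \<sigma>. src_mach G f' = src_mach G f})"
    by (rule divide_left_mono) (use bi c2 in auto)
  moreover have "rmin f = min (Bin G (dst_mach G f) / real (Delta G)) (Bout G (src_mach G f) / real (Delta G))"
    unfolding rmin_def using c1 by (simp add: min_divide_distrib_right)
  ultimately show ?thesis unfolding rate1_def by linarith
qed

abbreviation S :: "nat \<Rightarrow> 't oes_st" where "S t \<equiv> oes_state G t"

lemma S_Suc: "S (Suc t) = oes_step G (Suc t) (S t)" by simp

lemma Inv_S: "Inv t (S t)"
proof (induction t)
  case 0 then show ?case by (simp add: Inv_init)
next
  case (Suc t) then show ?case using Inv_step[OF Suc.IH] by simp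
qed

lemma st_step: "st (S t) q = Some s \<Longrightarrow> st (S (Suc t)) q = Some s"
  using L_st_old by simp

lemma st_persist: assumes "st (S t) q = Some s" "t \<le> t'" shows "st (S t') q = Some s"
  using assms(2)
proof (induction t' rule: dec_induct)
  case base then show ?case using assms(1) .
next
  case (step m) then show ?case using st_step by blast
qed

lemma st_origin: "st (S t) q = Some s \<Longrightarrow> st (S s) q = Some s \<and> 1 \<le> s \<and> s \<le> t"
proof (induction t)
  case 0 then show ?case by (simp add: oes_init_def)
next
  case (Suc t)
  from L_st_new[of "Suc t" "S t" q s] Suc.prems
  consider "st (S t) q = Some s" | "s = Suc t" by auto
  then show ?case
  proof cases
    case 1 then show ?thesis using Suc.IH by simp
  next
    case 2 then show ?thesis using Suc.prems by simp
  qed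
qed

lemma st_by: "st (S a) q \<noteq> None \<Longrightarrow> \<exists>s. st (S a) q = Some s \<and> s \<le> a \<and> 1 \<le> s \<and> st (S s) q = Some s"
  using st_origin by blast

lemma fin_step: "fin (S t) f = Some e \<Longrightarrow> fin (S (Suc t)) f = Some e"
  using L_fin_old[OF Inv_S] by simp

lemma fin_persist: assumes "fin (S t) f = Some e" "t \<le> t'" shows "fin (S t') f = Some e"
  using assms(2)
proof (induction t' rule: dec_induct)
  case base then show ?case using assms(1) .
next
  case (step m) then show ?case using fin_step by blast
qed

lemma fin_origin: "fin (S t) f = Some e \<Longrightarrow> fin (S e) f = Some e \<and> 1 \<le> e \<and> e \<le> t"
proof (induction t)
  case 0 then show ?case by (simp add: oes_init_def)
next
  case (Suc t)
  from L_fin_new[OF Inv_S, of t f e] Suc.prems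
  consider "fin (S t) f = Some e" | "e = Suc t" by auto
  then show ?case
  proof cases
    case 1 then show ?thesis using Suc.IH by simp
  next
    case 2 then show ?thesis using Suc.prems by simp
  qed
qed

lemma fin_by: "fin (S a) f \<noteq> None \<Longrightarrow> \<exists>e. fin (S a) f = Some e \<and> e \<le> a \<and> fin (S e) f = Some e"
  using fin_origin by blast

lemma step_task:
  assumes v: "valid G (j, n)"
    and H1: "n = 1 \<or> (\<exists>a. st (S a) (j, n - 1) \<noteq> None \<and> a + ptime G j \<le> Suc T0)"
    and H2: "\<And>q0. succ G q0 (j,n) \<Longrightarrow> place G (fst q0) = place G j \<Longrightarrow>
              \<exists>a. st (S a) q0 \<noteq> None \<and> a + ptime G (fst q0) \<le> Suc T0"
    and H3: "\<And>q0. succ G q0 (j,n) \<Longrightarrow> place G (fst q0) \<noteq> place G j \<Longrightarrow>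
              \<exists>c. fin (S c) (q0, (j,n)) \<noteq> None \<and> c \<le> T0"
  shows "st (S (Suc T0)) (j, n) \<noteq> None"
proof (cases "st (S T0) (j,n)")
  case (Some s)
  then show ?thesis using st_step by auto
next
  case None
  have db: "done_by G (S T0) q0 (Suc T0)" if A: "st (S a) q0 \<noteq> None" "a + ptime G (fst q0) \<le> Suc T0"
     "fst q0 \<in> tasks G" for a q0
  proof -
    obtain s where s: "st (S a) q0 = Some s" "s \<le> a" using st_by[OF A(1)] by blast
    have "1 \<le> ptime G (fst q0)" using ptime_pos A(3) by simp
    then have "a \<le> T0" using A(2) by simp
    then have "st (S T0) q0 = Some s" using st_persist[OF s(1)] by simp
    then show ?thesis using s A(2) by (auto simp: done_by_def)
  qed
  have "ready G (S T0) (Suc T0) (j,n)"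
    unfolding ready_def
  proof (intro conjI allI impI)
    show "fst (j, n) \<in> tasks G" "1 \<le> snd (j, n)" "snd (j, n) \<le> niter G" using v by (auto simp: valid_def)
    show "st (S T0) (j, n) = None" by (rule None)
    show "snd (j, n) = 1 \<or> done_by G (S T0) (fst (j, n), snd (j, n) - 1) (Suc T0)"
      using H1 db[of _ "(j, n-1)"] v by (auto simp: valid_def)
  next
    fix q0 assume sq: "succ G q0 (j, n)"
    have q0t: "fst q0 \<in> tasks G" using succ_valid[OF sq] by (simp add: valid_def)
    show "if place G (fst q0) = place G (fst (j, n)) then done_by G (S T0) q0 (Suc T0)
          else \<exists>s. fin (S T0) (q0, j, n) = Some s \<and> s < Suc T0"
    proof (cases "place G (fst q0) = place G (fst (j, n))")
      case True
      obtain a where "st (S a) q0 \<noteq> None" "a + ptime G (fst q0) \<le> Suc T0" using H2[OF sq] True by auto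
      then show ?thesis using db q0t True by simp
    next
      case False
      obtain c where c: "fin (S c) (q0, (j,n)) \<noteq> None" "c \<le> T0" using H3[OF sq] False by auto
      obtain e where e: "fin (S c) (q0, (j,n)) = Some e" "e \<le> c" using fin_by[OF c(1)] by blast
      have "fin (S T0) (q0, (j,n)) = Some e" using fin_persist[OF e(1) c(2)] .
      then show ?thesis using False e c by auto
    qed
  qed
  then show ?thesis by (simp add: step_st)
qed

lemma fin_mono: "fin (S a) f \<noteq> None \<Longrightarrow> a \<le> b \<Longrightarrow> fin (S b) f \<noteq> None"
  using fin_persist by blast

lemma flow_p_pos: "f \<in> flows G \<Longrightarrow> 1 \<le> ptime G (fst (fst f))"
  using flows_valid ptime_pos by (simp add: valid_def)

lemma actA:
  assumes ff: "f \<in> flows G" and s: "st (S s) (fst f) = Some s" and sp: "s + ptime G (fst (fst f)) = Suc u"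
    and ng: "\<And>g. g \<in> act (S u) \<union> pend (S u) \<Longrightarrow> next_flow g \<noteq> f"
  shows "f \<in> act1 G (Suc u) (S u)"
proof -
  have "s \<le> u" using sp flow_p_pos[OF ff] by simp
  then have "st (S u) (fst f) = Some s" using st_persist[OF s] by simp
  then have "f \<in> newf G (Suc u) (S u)" using ff sp by (auto simp: newf_def)
  moreover have "f \<notin> newp G (Suc u) (S u)" using ng by (auto simp: newp_def)
  ultimately show ?thesis by (simp add: act1_def)
qed

lemma act_noprev:
  assumes ff: "f \<in> flows G" and n1: "snd (fst f) = 1" and s: "st (S s) (fst f) = Some s"
    and sp: "s + ptime G (fst (fst f)) = Suc u"
  shows "f \<in> act1 G (Suc u) (S u)"
proof (rule actA[OF ff s sp])
  fix g assume g: "g \<in> act (S u) \<union> pend (S u)"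
  then have "g \<in> flows G" using I4[OF Inv_S] by blast
  then have "1 \<le> snd (fst g)" using flows_valid by (simp add: valid_def)
  then show "next_flow g \<noteq> f" using n1 by (auto simp: next_flow_def)
qed

lemma act_early:
  assumes ff: "f \<in> flows G" and s: "st (S s) (fst f) = Some s"
    and sp: "s + ptime G (fst (fst f)) = Suc u"
    and e: "fin (S e) (prevf f) = Some e" and el: "e < Suc u"
  shows "f \<in> act1 G (Suc u) (S u)"
proof (rule actA[OF ff s sp])
  fix g assume g: "g \<in> act (S u) \<union> pend (S u)"
  show "next_flow g \<noteq> f"
  proof
    assume "next_flow g = f"
    then have "g = prevf f" by auto
    moreover have "fin (S u) (prevf f) = Some e" using fin_persist[OF e] el by simp
    ultimately show False using I4[OF Inv_S g] by simp
  qed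
qed

lemma act_late:
  assumes ff: "f \<in> flows G" and n2: "2 \<le> snd (fst f)" and s: "st (S s) (fst f) = Some s"
    and e: "fin (S e) (prevf f) = Some e" and le: "s + ptime G (fst (fst f)) \<le> e"
  shows "f \<in> act1 G (Suc e) (S e)"
proof -
  let ?g = "prevf f"
  have pf: "?g \<in> flows G" "next_flow ?g = f" using prev_flows[OF ff n2] by auto
  have e1: "1 \<le> e" using fin_origin[OF e] by simp
  then obtain e' where e': "e = Suc e'" by (cases e) auto
  have gn: "fin (S e') ?g = None"
  proof (rule ccontr)
    assume "fin (S e') ?g \<noteq> None"
    then obtain e'' where h: "fin (S e') ?g = Some e''" "e'' \<le> e'" using fin_by by blast
    have "e' \<le> e" using e' by linarith
    then have "fin (S e) ?g = Some e''" using fin_persist[OF h(1)] by blast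
    then have "e'' = e" using e by simp
    then show False using h(2) e' by linarith
  qed
  have nprom: "f \<notin> prom G (Suc e') (S e')"
  proof
    assume "f \<in> prom G (Suc e') (S e')"
    then obtain g' where "fin (S e') g' = Some e'" "next_flow g' = f" by (auto simp: prom_def)
    then have "g' = ?g" by auto
    with gn \<open>fin (S e') g' = Some e'\<close> show False by simp
  qed
  have "f \<in> pend (S e') \<union> newp G (Suc e') (S e')"
  proof (cases "s + ptime G (fst (fst f)) = e")
    case True
    have "s \<le> e'" using True e' flow_p_pos[OF ff] by simp
    then have s': "st (S e') (fst f) = Some s" using st_persist[OF s] by simp
    then have nf: "f \<in> newf G (Suc e') (S e')" using ff True e' by (auto simp: newf_def)
    obtain s'' where s'': "st (S e') (fst (fst f), snd (fst f) - 1) = Some s''"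
        "s'' + ptime G (fst (fst f)) \<le> s"
      using I8[OF Inv_S, of e' "fst (fst f)" "snd (fst f)" s] s' n2 by (cases "fst f") auto
    have "?g \<in> act (S e') \<union> pend (S e')"
      by (rule I5[OF Inv_S pf(1), of _ s'']) (use s'' \<open>s \<le> e'\<close> gn in \<open>auto simp: fst_prevf\<close>)
    then have "f \<in> newp G (Suc e') (S e')" using nf pf(2) unfolding newp_def by blast
    then show ?thesis by simp
  next
    case False
    with le e' have lt: "s + ptime G (fst (fst f)) \<le> e'" by simp
    have i7: "fin (S e') ?g \<noteq> None" if "f \<in> act (S e') \<or> fin (S e') f \<noteq> None"
      by (rule I7[OF Inv_S ff pf(1)]) (use that n2 in \<open>auto simp: fst_prevf\<close>)
    have fn: "fin (S e') f = None" using i7 gn by blast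
    have "s \<le> e'" using lt by simp
    then have "st (S e') (fst f) = Some s" using st_persist[OF s] by simp
    then have "f \<in> act (S e') \<union> pend (S e')" using I5[OF Inv_S ff _ lt fn] by simp
    then show ?thesis using i7 gn by blast
  qed
  then have "f \<in> pend1 G (Suc e') (S e')" using nprom by (simp add: pend1_def)
  then have "f \<in> pend (S e)" using e' by (simp add: step_pend)
  moreover have "fin (S e) ?g = Some (Suc e - 1)" using e by simp
  ultimately have "f \<in> prom G (Suc e) (S e)" using pf(2) unfolding prom_def by blast
  then show ?thesis by (simp add: act1_def)
qed

lemma prog1:
  assumes I: "Inv t \<sigma>" and f: "f \<in> act1 G (Suc t) \<sigma>" and fn: "fin (oes_step G (Suc t) \<sigma>) f = None"
  shows "sent \<sigma> f + rmin f \<le> sent (oes_step G (Suc t) \<sigma>) f \<and> f \<in> act (oes_step G (Suc t) \<sigma>)"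
proof -
  have nd: "f \<notin> fdone1 G (Suc t) \<sigma>" using fn by (auto simp: step_fin split: if_splits)
  then have lt: "sent \<sigma> f + amt1 G (Suc t) \<sigma> f < vol G f" using f by (simp add: fdone1_def)
  have am: "amt1 G (Suc t) \<sigma> f = min (rate1 G (Suc t) \<sigma> f) (vol G f - sent \<sigma> f)" using f by (simp add: amt1_def)
  have "amt1 G (Suc t) \<sigma> f = rate1 G (Suc t) \<sigma> f" using lt am by (auto simp: min_def split: if_splits)
  moreover have "rmin f \<le> rate1 G (Suc t) \<sigma> f" by (rule rate_ge[OF I f])
  ultimately show ?thesis using nd f by (simp add: step_sent step_act)
qed

lemma progress:
  assumes f: "f \<in> act1 G (Suc u) (S u)"
  shows "fin (S (Suc u + K)) f = None \<Longrightarrow> real (Suc K) * rmin f \<le> sent (S (Suc u + K)) f \<and> f \<in> act (S (Suc u + K))"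
proof (induction K)
  case 0
  have p: "f \<in> flows G" "fin (S u) f = None" using L_act1_props[OF Inv_S f] by auto
  have "0 \<le> sent (S u) f" using IS[OF Inv_S p] by simp
  with prog1[OF Inv_S f] 0 show ?case by simp
next
  case (Suc K)
  have "fin (S (Suc u + K)) f = None" using Suc.prems fin_step
    by (metis add_Suc_right option.exhaust option.distinct(1))
  from Suc.IH[OF this] have ih: "real (Suc K) * rmin f \<le> sent (S (Suc u + K)) f" "f \<in> act (S (Suc u + K))" by auto
  have fa: "f \<in> act1 G (Suc (Suc u + K)) (S (Suc u + K))" using ih(2) by (simp add: act1_def)
  have "sent (S (Suc u + K)) f + rmin f \<le> sent (S (Suc (Suc u + K))) f \<and> f \<in> act (S (Suc (Suc u + K)))"
    using prog1[OF Inv_S fa] Suc.prems by simp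
  then show ?case using ih by (simp add: algebra_simps)
qed

lemma finish:
  assumes f: "f \<in> act1 G (Suc u) (S u)" and v: "vol G f \<le> real (Suc K) * rmin f"
  shows "fin (S (Suc u + K)) f \<noteq> None"
proof
  assume fn: "fin (S (Suc u + K)) f = None"
  have ff: "f \<in> flows G" using L_act1_props[OF Inv_S f] by simp
  have "real (Suc K) * rmin f \<le> sent (S (Suc u + K)) f" using progress[OF f fn] by blast
  moreover have "sent (S (Suc u + K)) f < vol G f" using IS[OF Inv_S ff fn] by blast
  ultimately show False using v by linarith
qed

lemma step_flow:
  assumes ff: "f \<in> flows G" and a: "st (S a) (fst f) \<noteq> None" and ab: "a + ptime G (fst (fst f)) \<le> b"
    and pv: "snd (fst f) = 1 \<or> (fin (S c) (prevf f) \<noteq> None \<and> c < b)"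
    and v: "vol G f \<le> real (Suc K) * rmin f"
  shows "fin (S (b + K)) f \<noteq> None"
proof -
  obtain s where s: "st (S a) (fst f) = Some s" "s \<le> a" "st (S s) (fst f) = Some s" using st_by[OF a] by blast
  have pp: "1 \<le> ptime G (fst (fst f))" by (rule flow_p_pos[OF ff])
  obtain u where u: "s + ptime G (fst (fst f)) = Suc u"
    using pp by (intro that[of "s + ptime G (fst (fst f)) - 1"]) simp
  have ub: "Suc u \<le> b" using u s ab by simp
  show ?thesis
  proof (cases "snd (fst f) = 1")
    case True
    have "fin (S (Suc u + K)) f \<noteq> None" using finish[OF act_noprev[OF ff True s(3) u] v] .
    then show ?thesis by (rule fin_mono) (use ub in simp)
  next
    case False
    with pv have c: "fin (S c) (prevf f) \<noteq> None" "c < b" by auto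
    have n2: "2 \<le> snd (fst f)" using False flows_valid[OF ff] by (simp add: valid_def)
    obtain e where e: "fin (S c) (prevf f) = Some e" "e \<le> c" "fin (S e) (prevf f) = Some e"
      using fin_by[OF c(1)] by blast
    show ?thesis
    proof (cases "e < Suc u")
      case True
      have "fin (S (Suc u + K)) f \<noteq> None" using finish[OF act_early[OF ff s(3) u e(3) True] v] .
      then show ?thesis by (rule fin_mono) (use ub in simp)
    next
      case False
      have "fin (S (Suc e + K)) f \<noteq> None"
        using finish[OF act_late[OF ff n2 s(3) e(3)] v] False u by simp
      then show ?thesis by (rule fin_mono) (use e c in simp)
    qed
  qed
qed

lemma generic:
  fixes U :: "'t inst \<Rightarrow> nat" and W :: "'t flow \<Rightarrow> nat"
  assumes U1: "\<And>q. valid G q \<Longrightarrow> 1 \<le> U q"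
  and U2: "\<And>j n. valid G (j,n) \<Longrightarrow> 2 \<le> n \<Longrightarrow> U (j, n-1) + ptime G j \<le> U (j,n)"
  and U3: "\<And>q0 q. succ G q0 q \<Longrightarrow> place G (fst q0) = place G (fst q) \<Longrightarrow> U q0 + ptime G (fst q0) \<le> U q"
  and U4: "\<And>f. f \<in> flows G \<Longrightarrow> W f \<le> U (snd f)"
  and W1: "\<And>f. f \<in> flows G \<Longrightarrow> \<exists>b K. U (fst f) + ptime G (fst (fst f)) \<le> b \<and>
             (2 \<le> snd (fst f) \<longrightarrow> W (prevf f) \<le> b) \<and> vol G f \<le> real (Suc K) * rmin f \<and> b + K < W f"
  shows "(\<forall>q. valid G q \<longrightarrow> st (S (U q)) q \<noteq> None) \<and> (\<forall>f\<in>flows G. fin (S (W f - 1)) f \<noteq> None)"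
proof -
  have main: "(\<forall>q. valid G q \<and> rk G q = r \<longrightarrow> st (S (U q)) q \<noteq> None) \<and>
     (\<forall>f\<in>flows G. rk G (fst f) = r \<longrightarrow> fin (S (W f - 1)) f \<noteq> None)" for r
  proof (induction r rule: less_induct)
    case (less r)
    have T: "st (S (U q)) q \<noteq> None" if vq: "valid G q" and rq: "rk G q = r" for q
    proof -
      obtain j n where q: "q = (j,n)" by (cases q)
      obtain T0 where T0: "U q = Suc T0" using U1[OF vq] by (intro that[of "U q - 1"]) simp
      have "st (S (Suc T0)) (j, n) \<noteq> None"
      proof (rule step_task)
        show "valid G (j, n)" using vq q by simp
        show "n = 1 \<or> (\<exists>a. st (S a) (j, n - 1) \<noteq> None \<and> a + ptime G j \<le> Suc T0)"
        proof (cases "n = 1")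
          case False
          then have n2: "2 \<le> n" using vq q by (simp add: valid_def)
          have v': "valid G (j, n-1)" using vq q n2 by (auto simp: valid_def)
          have "rk G (j, n-1) < r" using prev_rk[OF n2, of j] rq q by simp
          then have "st (S (U (j,n-1))) (j, n - 1) \<noteq> None" using less.IH v' by blast
          moreover have "U (j, n-1) + ptime G j \<le> Suc T0" using U2[of j n] vq q n2 T0 by simp
          ultimately show ?thesis by blast
        qed simp
      next
        fix q0 assume sq: "succ G q0 (j, n)" and pl: "place G (fst q0) = place G j"
        have "valid G q0" using succ_valid[OF sq] by simp
        moreover have "rk G q0 < r" using succ_rk[OF sq] rq q by simp
        ultimately have "st (S (U q0)) q0 \<noteq> None" using less.IH by blast
        moreover have "U q0 + ptime G (fst q0) \<le> Suc T0" using U3[OF sq] pl T0 q by simp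
        ultimately show "\<exists>a. st (S a) q0 \<noteq> None \<and> a + ptime G (fst q0) \<le> Suc T0" by blast
      next
        fix q0 assume sq: "succ G q0 (j, n)" and pl: "place G (fst q0) \<noteq> place G j"
        have ff: "(q0, (j,n)) \<in> flows G" using sq pl by (simp add: flows_def)
        have "rk G q0 < r" using succ_rk[OF sq] rq q by simp
        then have "fin (S (W (q0, (j,n)) - 1)) (q0, (j,n)) \<noteq> None" using less.IH ff by fastforce
        moreover have "W (q0, (j,n)) - 1 \<le> T0" using U4[OF ff] T0 q by simp
        ultimately show "\<exists>c. fin (S c) (q0, j, n) \<noteq> None \<and> c \<le> T0" by blast
      qed
      then show ?thesis using T0 q by simp
    qed
    have F: "fin (S (W f - 1)) f \<noteq> None" if ff: "f \<in> flows G" and rf: "rk G (fst f) = r" for f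
    proof -
      obtain b K where bK: "U (fst f) + ptime G (fst (fst f)) \<le> b"
         "2 \<le> snd (fst f) \<longrightarrow> W (prevf f) \<le> b" "vol G f \<le> real (Suc K) * rmin f" "b + K < W f"
        using W1[OF ff] by blast
      have a: "st (S (U (fst f))) (fst f) \<noteq> None" using T[OF _ rf] flows_valid[OF ff] by simp
      have pv: "snd (fst f) = 1 \<or> (fin (S (W (prevf f) - 1)) (prevf f) \<noteq> None \<and> W (prevf f) - 1 < b)"
      proof (cases "snd (fst f) = 1")
        case False
        then have n2: "2 \<le> snd (fst f)" using flows_valid[OF ff] by (simp add: valid_def)
        have pf: "prevf f \<in> flows G" using prev_flows[OF ff n2] by simp
        have "rk G (fst (prevf f)) < r" using prev_rk[OF n2, of "fst (fst f)"] rf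
          by (cases "fst f") (simp add: fst_prevf)
        then have "fin (S (W (prevf f) - 1)) (prevf f) \<noteq> None" using less.IH pf by blast
        moreover have "W (prevf f) - 1 < b" using bK(1,2) n2 flow_p_pos[OF ff] by simp
        ultimately show ?thesis by blast
      qed simp
      have "fin (S (b + K)) f \<noteq> None" by (rule step_flow[OF ff a bK(1) pv bK(3)])
      then show ?thesis by (rule fin_mono) (use bK(4) in simp)
    qed
    show ?case using T F by blast
  qed
  show ?thesis using main by blast
qed

lemma rk_prev_eq: "2 \<le> n \<Longrightarrow> rk G (j, n - 1) + 4 = rk G (j, n)"
  by (simp add: rk_def)

lemma Delta_pos_flow: "f \<in> flows G \<Longrightarrow> 1 \<le> Delta G"
proof -
  assume ff: "f \<in> flows G"
  let ?m = "place G (fst (snd f))"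
  have m: "?m \<in> {1..nmach G}" using flows_valid[OF ff] place_rng by (simp add: valid_def)
  have "pr f \<in> {e\<in>one_iter_flows G. place G (snd e) = ?m}" using pr_one_iter[OF ff] by (simp add: pr_def)
  then have "0 < deg_in G ?m" unfolding deg_in_def using one_iter_fin card_gt_0_iff by fastforce
  then show ?thesis using Delta_ge[OF m] by simp
qed

lemma rmin_pos: "f \<in> flows G \<Longrightarrow> 0 < rmin f"
proof -
  assume ff: "f \<in> flows G"
  have d: "dst_mach G f \<in> {1..nmach G}" "src_mach G f \<in> {1..nmach G}"
    using flows_valid[OF ff] place_rng by (auto simp: valid_def dst_mach_def src_mach_def)
  then show ?thesis using B_pos Delta_pos_flow[OF ff] unfolding rmin_def by simp
qed

lemma terminates_all: "\<forall>q. valid G q \<longrightarrow> st (S (U0 q)) q \<noteq> None"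
  if "U0 = (\<lambda>q. 2 * (1 + (\<Sum>j\<in>tasks G. ptime G j) + (\<Sum>f\<in>flows G. nat \<lceil>vol G f / rmin f\<rceil>)) * rk G q
              + (1 + (\<Sum>j\<in>tasks G. ptime G j) + (\<Sum>f\<in>flows G. nat \<lceil>vol G f / rmin f\<rceil>)))"
proof -
  define Kf where "Kf f = nat \<lceil>vol G f / rmin f\<rceil>" for f
  define C where "C = 1 + (\<Sum>j\<in>tasks G. ptime G j) + (\<Sum>f\<in>flows G. Kf f)"
  have U0: "U0 = (\<lambda>q. 2 * C * rk G q + C)" using that by (simp add: C_def Kf_def)
  define W0 :: "'t flow \<Rightarrow> nat" where "W0 f = 2 * C * rk G (fst f) + 2 * C" for f
  have pC: "ptime G j \<le> C" if "j \<in> tasks G" for j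
  proof -
    have "ptime G j \<le> (\<Sum>j\<in>tasks G. ptime G j)" by (rule member_le_sum[OF that _ fin_tasks]) simp
    then show ?thesis by (simp add: C_def)
  qed
  have pK: "ptime G (fst (fst f)) + Kf f < C" if ff: "f \<in> flows G" for f
  proof -
    have "fst (fst f) \<in> tasks G" using flows_valid[OF ff] by (simp add: valid_def)
    then have "ptime G (fst (fst f)) \<le> (\<Sum>j\<in>tasks G. ptime G j)"
      by (rule member_le_sum[OF _ _ fin_tasks]) simp
    moreover have "Kf f \<le> (\<Sum>f\<in>flows G. Kf f)"
      by (rule member_le_sum[OF ff _ flows_fin]) simp
    ultimately show ?thesis by (simp add: C_def)
  qed
  have lt_mono: "2 * C * a + 2 * C \<le> 2 * C * b" if "a < b" for a b :: nat
  proof -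
    have "2 * C * (a + 1) \<le> 2 * C * b" using that by (intro mult_le_mono2) simp
    then show ?thesis by (simp add: algebra_simps)
  qed
  have "(\<forall>q. valid G q \<longrightarrow> st (S (U0 q)) q \<noteq> None) \<and> (\<forall>f\<in>flows G. fin (S (W0 f - 1)) f \<noteq> None)"
  proof (rule generic)
    fix q show "1 \<le> U0 q" by (simp add: U0 C_def)
  next
    fix j n assume v: "valid G (j, n)" and n2: "2 \<le> n"
    have "ptime G j \<le> C" using pC v by (simp add: valid_def)
    moreover have "rk G (j, n - 1) < rk G (j, n)" using rk_prev_eq[OF n2, of j] by simp
    ultimately show "U0 (j, n - 1) + ptime G j \<le> U0 (j, n)" using lt_mono[of "rk G (j, n - 1)" "rk G (j, n)"]
      by (simp add: U0)
  next
    fix q0 q assume sq: "succ G q0 q"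
    have "ptime G (fst q0) \<le> C" using pC succ_valid[OF sq] by (simp add: valid_def)
    then show "U0 q0 + ptime G (fst q0) \<le> U0 q" using lt_mono[OF succ_rk[OF sq]] by (simp add: U0)
  next
    fix f assume ff: "f \<in> flows G"
    have "succ G (fst f) (snd f)" using ff by (simp add: flows_def)
    from lt_mono[OF succ_rk[OF this]] show "W0 f \<le> U0 (snd f)" by (simp add: U0 W0_def)
  next
    fix f assume ff: "f \<in> flows G"
    show "\<exists>b K. U0 (fst f) + ptime G (fst (fst f)) \<le> b \<and> (2 \<le> snd (fst f) \<longrightarrow> W0 (prevf f) \<le> b) \<and>
           vol G f \<le> real (Suc K) * rmin f \<and> b + K < W0 f"
    proof (intro exI conjI impI)
      show "U0 (fst f) + ptime G (fst (fst f)) \<le> U0 (fst f) + ptime G (fst (fst f))" by simp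
    next
      assume n2: "2 \<le> snd (fst f)"
      have "rk G (fst (prevf f)) < rk G (fst f)"
        using rk_prev_eq[OF n2, of "fst (fst f)"] by (simp add: fst_prevf)
      from lt_mono[OF this] show "W0 (prevf f) \<le> U0 (fst f) + ptime G (fst (fst f))"
        by (simp add: U0 W0_def)
    next
      have r: "0 < rmin f" by (rule rmin_pos[OF ff])
      have "vol G f / rmin f \<le> real (Kf f)" unfolding Kf_def by (rule real_nat_ceiling_ge)
      then have "vol G f \<le> real (Kf f) * rmin f" using r by (simp add: divide_le_eq)
      then show "vol G f \<le> real (Suc (Kf f)) * rmin f" using r by (simp add: algebra_simps)
    next
      show "U0 (fst f) + ptime G (fst (fst f)) + Kf f < W0 f" using pK[OF ff] by (simp add: U0 W0_def)
    qed
  qed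
  then show ?thesis by blast
qed

lemma quant:
  assumes fe: "feasible G x k" and D1: "1 \<le> Delta G"
  shows "\<forall>q. valid G q \<longrightarrow> st (S (Delta G * x q)) q \<noteq> None"
proof -
  let ?D = "Delta G"
  have FX: "\<forall>j\<in>tasks G. \<forall>n\<in>{1..niter G}. 1 \<le> x (j, n)"
    using fe unfolding feasible_def by (elim conjE) assumption
  have FF: "\<forall>f\<in>flows G.
        (\<forall>t. 0 \<le> k f t)
      \<and> (\<forall>t. k f t \<noteq> 0 \<longrightarrow> x (fst f) + ptime G (fst (fst f)) \<le> t \<and> t < x (snd f))
      \<and> (\<Sum>t\<in>{x (fst f) + ptime G (fst (fst f)) ..< x (snd f)}. k f t) = vol G f"
    using fe unfolding feasible_def by (elim conjE) assumption
  have FS: "\<forall>q q'. succ G q q' \<and> place G (fst q) = place G (fst q')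
        \<longrightarrow> x q + ptime G (fst q) \<le> x q'"
    using fe unfolding feasible_def by (elim conjE) assumption
  have FP: "\<forall>j\<in>tasks G. \<forall>n. 1 \<le> n \<and> n < niter G \<longrightarrow> x (j, n) + ptime G j \<le> x (j, Suc n)"
    using fe unfolding feasible_def by (elim conjE) assumption
  have FN: "\<forall>f\<in>flows G. next_flow f \<in> flows G \<longrightarrow>
        (\<forall>t t'. k f t \<noteq> 0 \<and> k (next_flow f) t' \<noteq> 0 \<longrightarrow> t < t')"
    using fe unfolding feasible_def by (elim conjE) assumption
  have FO: "\<forall>m t. (\<Sum>f\<in>{f\<in>flows G. src_mach G f = m}. k f t) \<le> Bout G m"
    using fe unfolding feasible_def by (elim conjE) assumption
  have FI: "\<forall>m t. (\<Sum>f\<in>{f\<in>flows G. dst_mach G f = m}. k f t) \<le> Bin G m"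
    using fe unfolding feasible_def by (elim conjE) assumption
  define nz where "nz f = {t. k f t \<noteq> 0}" for f
  define Fs where "Fs f = Min (nz f)" for f
  define Ls where "Ls f = Max (nz f)" for f
  have nz_sub: "nz f \<subseteq> {x (fst f) + ptime G (fst (fst f)) ..< x (snd f)}" if ff: "f \<in> flows G" for f
    using FF ff by (auto simp: nz_def)
  have nz_fin: "finite (nz f)" if ff: "f \<in> flows G" for f
    using finite_subset[OF nz_sub[OF ff]] by simp
  have nz_ne: "nz f \<noteq> {}" if ff: "f \<in> flows G" for f
  proof
    assume "nz f = {}"
    then have "\<forall>t. k f t = 0" by (auto simp: nz_def)
    then have "(\<Sum>t\<in>{x (fst f) + ptime G (fst (fst f)) ..< x (snd f)}. k f t) = 0" by simp
    then show False using FF ff vol_pos[OF ff] by simp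
  qed
  have FsL: "Fs f \<in> nz f" "Ls f \<in> nz f" "\<And>t. t \<in> nz f \<Longrightarrow> Fs f \<le> t \<and> t \<le> Ls f"
    if ff: "f \<in> flows G" for f
    using nz_fin[OF ff] nz_ne[OF ff] by (auto simp: Fs_def Ls_def)
  have kB: "k f t \<le> min (Bin G (dst_mach G f)) (Bout G (src_mach G f))" if ff: "f \<in> flows G" for f t
  proof -
    have fin1: "finite {f\<in>flows G. src_mach G f = src_mach G f0}" for f0 using flows_fin by simp
    have fin2: "finite {f\<in>flows G. dst_mach G f = dst_mach G f0}" for f0 using flows_fin by simp
    have "k f t \<le> (\<Sum>f'\<in>{f'\<in>flows G. src_mach G f' = src_mach G f}. k f' t)"
      by (rule member_le_sum[OF _ _ fin1]) (use ff FF in auto)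
    also have "\<dots> \<le> Bout G (src_mach G f)" using FO by blast
    finally have 1: "k f t \<le> Bout G (src_mach G f)" .
    have "k f t \<le> (\<Sum>f'\<in>{f'\<in>flows G. dst_mach G f' = dst_mach G f}. k f' t)"
      by (rule member_le_sum[OF _ _ fin2]) (use ff FF in auto)
    also have "\<dots> \<le> Bin G (dst_mach G f)" using FI by blast
    finally show ?thesis using 1 by simp
  qed
  have volB: "vol G f \<le> real (Ls f - Fs f + 1) * min (Bin G (dst_mach G f)) (Bout G (src_mach G f))"
    if ff: "f \<in> flows G" for f
  proof -
    have sub: "{Fs f..Ls f} \<subseteq> {x (fst f) + ptime G (fst (fst f)) ..< x (snd f)}"
      using nz_sub[OF ff] FsL[OF ff] by fastforce
    have "vol G f = (\<Sum>t\<in>{x (fst f) + ptime G (fst (fst f)) ..< x (snd f)}. k f t)" using FF ff by simp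
    also have "\<dots> = (\<Sum>t\<in>{Fs f..Ls f}. k f t)"
    proof (rule sum.mono_neutral_right[OF _ sub])
      show "\<forall>i\<in>{x (fst f) + ptime G (fst (fst f))..<x (snd f)} - {Fs f..Ls f}. k f i = 0"
        using FsL[OF ff] by (force simp: nz_def)
    qed simp
    also have "\<dots> \<le> (\<Sum>t\<in>{Fs f..Ls f}. min (Bin G (dst_mach G f)) (Bout G (src_mach G f)))"
      by (rule sum_mono) (rule kB[OF ff])
    also have "\<dots> = real (Ls f - Fs f + 1) * min (Bin G (dst_mach G f)) (Bout G (src_mach G f))"
      using FsL[OF ff] by (simp add: Suc_diff_le)
    finally show ?thesis .
  qed
  define W :: "'t flow \<Rightarrow> nat" where "W f = ?D * (Ls f + 1)" for f
  have "(\<forall>q. valid G q \<longrightarrow> st (S (?D * x q)) q \<noteq> None) \<and> (\<forall>f\<in>flows G. fin (S (W f - 1)) f \<noteq> None)"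
  proof (rule generic)
    fix q assume v: "valid G q"
    then have "1 \<le> x q" using FX by (cases q) (auto simp: valid_def)
    then show "1 \<le> ?D * x q" using D1 by (metis mult_le_mono nat_mult_1)
  next
    fix j n assume v: "valid G (j, n)" and n2: "2 \<le> n"
    have j: "j \<in> tasks G" "n \<le> niter G" using v by (simp_all add: valid_def)
    have FPj: "\<forall>m. 1 \<le> m \<and> m < niter G \<longrightarrow> x (j, m) + ptime G j \<le> x (j, Suc m)" using FP j(1) by blast
    then have "x (j, n - 1) + ptime G j \<le> x (j, Suc (n - 1))"
    proof -
      have "1 \<le> n - 1" "n - 1 < niter G" using n2 j(2) by auto
      then show ?thesis using FPj by blast
    qed
    then have a: "x (j, n - 1) + ptime G j \<le> x (j, n)" using n2 by simp
    have "ptime G j \<le> ?D * ptime G j" using D1 by simp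
    then have "?D * x (j, n - 1) + ptime G j \<le> ?D * (x (j, n - 1) + ptime G j)"
      by (simp add: add_mult_distrib2)
    also have "\<dots> \<le> ?D * x (j, n)" using a by (rule mult_le_mono2)
    finally show "?D * x (j, n - 1) + ptime G j \<le> ?D * x (j, n)" .
  next
    fix q0 q assume sq: "succ G q0 q" and pl: "place G (fst q0) = place G (fst q)"
    have a: "x q0 + ptime G (fst q0) \<le> x q" using FS sq pl by blast
    have "ptime G (fst q0) \<le> ?D * ptime G (fst q0)" using D1 by simp
    then have "?D * x q0 + ptime G (fst q0) \<le> ?D * (x q0 + ptime G (fst q0))"
      by (simp add: add_mult_distrib2)
    also have "\<dots> \<le> ?D * x q" using a by (rule mult_le_mono2)
    finally show "?D * x q0 + ptime G (fst q0) \<le> ?D * x q" .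
  next
    fix f assume ff: "f \<in> flows G"
    have "Ls f < x (snd f)" using nz_sub[OF ff] FsL(2)[OF ff] by auto
    then show "W f \<le> ?D * x (snd f)" unfolding W_def by (intro mult_le_mono2) simp
  next
    fix f assume ff: "f \<in> flows G"
    let ?F = "Fs f" and ?L = "Ls f"
    have FL: "?F \<le> ?L" using FsL[OF ff] by blast
    have xF: "x (fst f) + ptime G (fst (fst f)) \<le> ?F" using nz_sub[OF ff] FsL(1)[OF ff] by auto
    show "\<exists>b K. ?D * x (fst f) + ptime G (fst (fst f)) \<le> b \<and> (2 \<le> snd (fst f) \<longrightarrow> W (prevf f) \<le> b) \<and>
           vol G f \<le> real (Suc K) * rmin f \<and> b + K < W f"
    proof (intro exI conjI impI)
      have "ptime G (fst (fst f)) \<le> ?D * ptime G (fst (fst f))" using D1 by simp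
      then have "?D * x (fst f) + ptime G (fst (fst f)) \<le> ?D * (x (fst f) + ptime G (fst (fst f)))"
        by (simp add: add_mult_distrib2)
      also have "\<dots> \<le> ?D * ?F" using xF by (rule mult_le_mono2)
      finally show "?D * x (fst f) + ptime G (fst (fst f)) \<le> ?D * ?F" .
    next
      assume n2: "2 \<le> snd (fst f)"
      have pf: "prevf f \<in> flows G" "next_flow (prevf f) = f" using prev_flows[OF ff n2] by auto
      have "Ls (prevf f) < ?F"
      proof -
        have a: "k (prevf f) (Ls (prevf f)) \<noteq> 0" "k f (Fs f) \<noteq> 0"
          using FsL(2)[OF pf(1)] FsL(1)[OF ff] by (auto simp: nz_def)
        have "\<forall>t t'. k (prevf f) t \<noteq> 0 \<and> k (next_flow (prevf f)) t' \<noteq> 0 \<longrightarrow> t < t'"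
          using bspec[OF FN pf(1)] pf(2) ff by simp
        then show ?thesis using a pf(2) by metis
      qed
      then show "W (prevf f) \<le> ?D * ?F" unfolding W_def by (intro mult_le_mono2) simp
    next
      have sk: "Suc (?D * (?L - ?F + 1) - 1) = ?D * (?L - ?F + 1)" using D1 by simp
      have r: "real (?D * (?L - ?F + 1)) * rmin f = real (?L - ?F + 1) * min (Bin G (dst_mach G f)) (Bout G (src_mach G f))"
        using D1 unfolding rmin_def by (simp add: field_simps)
      show "vol G f \<le> real (Suc (?D * (?L - ?F + 1) - 1)) * rmin f"
        unfolding sk r by (rule volB[OF ff])
    next
      have e: "?D * ?F + ?D * (?L - ?F + 1) = ?D * (?L + 1)"
        using FL by (simp add: add_mult_distrib2[symmetric])
      have "1 \<le> ?D * (?L - ?F + 1)" using D1 by simp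
      then show "?D * ?F + (?D * (?L - ?F + 1) - 1) < W f" using e unfolding W_def by linarith
    qed
  qed
  then show ?thesis by blast
qed

lemma start_unique: "oes_start G q s1 \<Longrightarrow> oes_start G q s2 \<Longrightarrow> s1 = s2"
  unfolding oes_start_def
  by (metis nat_le_linear option.inject st_persist)

lemma niter_pos: "1 \<le> niter G" using wf by (simp add: wf_job_def)

lemma start_of: assumes "valid G q" "st (S a) q \<noteq> None"
  shows "oes_start G q (THE s. oes_start G q s) \<and> (THE s. oes_start G q s) \<le> a"
proof -
  obtain s where s: "st (S a) q = Some s" "s \<le> a" "st (S s) q = Some s" using st_by[OF assms(2)] by blast
  have os: "oes_start G q s" using s(3) by (simp add: oes_start_def)
  have "(THE s. oes_start G q s) = s" using os start_unique by blast
  then show ?thesis using os s by simp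
qed

lemma final_term: "oes_terminates G"
  unfolding oes_terminates_def
proof
  fix j assume j: "j \<in> tasks G"
  have v: "valid G (j, niter G)" using j niter_pos by (simp add: valid_def)
  have ex: "\<exists>U0. \<forall>q. valid G q \<longrightarrow> st (S (U0 q)) q \<noteq> None"
    by (rule exI, rule terminates_all[OF refl])
  then obtain U0 where "\<forall>q. valid G q \<longrightarrow> st (S (U0 q)) q \<noteq> None" by blast
  then have "st (S (U0 (j, niter G))) (j, niter G) \<noteq> None" using v by blast
  then show "\<exists>s. oes_start G (j, niter G) s" using start_of[OF v] by blast
qed

lemma final_bound:
  assumes fe: "feasible G x k" and D1: "1 \<le> Delta G" and ne: "tasks G \<noteq> {}"
  shows "oes_makespan G \<le> Delta G * makespan G x"
  unfolding oes_makespan_def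
proof (rule Max.boundedI)
  show "finite ((\<lambda>j. (THE s. oes_start G (j, niter G) s) + ptime G j) ` tasks G)" using fin_tasks by simp
  show "(\<lambda>j. (THE s. oes_start G (j, niter G) s) + ptime G j) ` tasks G \<noteq> {}" using ne by simp
next
  fix y assume "y \<in> (\<lambda>j. (THE s. oes_start G (j, niter G) s) + ptime G j) ` tasks G"
  then obtain j where j: "j \<in> tasks G" and y: "y = (THE s. oes_start G (j, niter G) s) + ptime G j" by blast
  have v: "valid G (j, niter G)" using j niter_pos by (simp add: valid_def)
  have "st (S (Delta G * x (j, niter G))) (j, niter G) \<noteq> None" using quant[OF fe D1] v by blast
  then have le: "(THE s. oes_start G (j, niter G) s) \<le> Delta G * x (j, niter G)" using start_of[OF v] by blast
  have mk: "x (j, niter G) + ptime G j \<le> makespan G x"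
    unfolding makespan_def by (rule Max_ge) (use j fin_tasks in auto)
  have pD: "ptime G j \<le> Delta G * ptime G j" using D1 by simp
  have "y \<le> Delta G * x (j, niter G) + Delta G * ptime G j" using add_le_mono[OF le pD] y by simp
  then have "y \<le> Delta G * (x (j, niter G) + ptime G j)" by (simp add: add_mult_distrib2)
  also have "\<dots> \<le> Delta G * makespan G x" using mk by (rule mult_le_mono2)
  finally show "y \<le> Delta G * makespan G x" .
qed

end

theorem theorem1:
  fixes G :: "'t gnn_job"
  assumes "wf_job G"
    and "one_iter_flows G \<noteq> {}"
  shows "oes_terminates G \<and>
         (\<forall>x k. feasible G x k \<longrightarrow>
            real (oes_makespan G) \<le> real (Delta G) * real (makespan G x))"
proof -
  interpret J: job G by (rule job.intro) (rule assms(1))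
  obtain e where e: "e \<in> one_iter_flows G" using assms(2) by blast
  have st: "snd e \<in> tasks G" using e by (auto simp: one_iter_flows_def iter_edge_def next_edge_def tasks_def)
  then have ne: "tasks G \<noteq> {}" by blast
  let ?m = "place G (snd e)"
  have m: "?m \<in> {1..nmach G}" using J.place_rng[OF st] .
  have "e \<in> {e'\<in>one_iter_flows G. place G (snd e') = ?m}" using e by simp
  then have "0 < deg_in G ?m" unfolding deg_in_def using J.one_iter_fin card_gt_0_iff by fastforce
  then have D1: "1 \<le> Delta G" using J.Delta_ge[OF m] by simp
  show ?thesis
  proof (intro conjI allI impI)
    show "oes_terminates G" by (rule J.final_term)
  next
    fix x k assume fe: "feasible G x k"
    have "oes_makespan G \<le> Delta G * makespan G x" by (rule J.final_bound[OF fe D1 ne])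
    then have "real (oes_makespan G) \<le> real (Delta G * makespan G x)" by (rule of_nat_mono)
    then show "real (oes_makespan G) \<le> real (Delta G) * real (makespan G x)" by simp
  qed
qed

end
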